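(* Let $G$ be a locally compact abelian group, let $\mu\in M(\widehat{G})$ be a probability measure, and let $f=\widehat{\mu}:G\to\mathbb{C}$ be its characteristic function. Let $U$ be a Borel subset of $\widehat{G}$ with $U\cap(-U)=\emptyset$, where $-U=\{\gamma\in\widehat{G}:-\gamma\in U\}$. If $\mu(U)=1$, then $f$ is completely determined by $\operatorname{Im} f$, i.e. every characteristic function $g$ on $G$ with $\operatorname{Im} g\equiv \operatorname{Im} f$ satisfies $g\equiv f$.
   Context: $\widehat{G}$ denotes the dual group of $G$ (continuous homomorphisms $\gamma:G\to\{z\in\mathbb{C}:|z|=1\}$), written additively, with $(x,\gamma)=\gamma(x)$. $M(\widehat{G})$ is the Banach algebra of bounded regular complex Borel measures on $\widehat{G}$. For $\omega\in M(\widehat{G})$, $\widehat{\omega}(x)=\int_{\widehat{G}}\overline{(x,\gamma)}\,d\omega(\gamma)$, $x\in G$. A characteristic function on $G$ is a function of the form $\widehat{\mu}$ with $\mu$ a nonnegative measure in $M(\widehat{G})$ with $\mu(\widehat{G})=1$. *)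

theory Defs
  imports "HOL-Probability.Probability"
begin

definition lca_group :: "'a::{topological_ab_group_add,t2_space} itself \<Rightarrow> bool" where
  "lca_group _ \<longleftrightarrow> locally_compact_space (euclidean :: 'a topology)"

definition dual_group :: "('a::{topological_ab_group_add,t2_space} \<Rightarrow> complex) set" where
  "dual_group = {\<gamma>. continuous_on UNIV \<gamma> \<and> (\<forall>x. norm (\<gamma> x) = 1)
                     \<and> (\<forall>x y. \<gamma> (x + y) = \<gamma> x * \<gamma> y)}"

definition dual_neg :: "('a \<Rightarrow> complex) \<Rightarrow> ('a \<Rightarrow> complex)" where
  "dual_neg \<gamma> = (\<lambda>x. cnj (\<gamma> x))"

definition dual_topology :: "('a::{topological_ab_group_add,t2_space} \<Rightarrow> complex) topology" where
  "dual_topology = topology_generated_by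
     {{\<gamma> \<in> dual_group. \<gamma> ` K \<subseteq> V} | K V. compact K \<and> open V}"

definition dual_borel :: "('a::{topological_ab_group_add,t2_space} \<Rightarrow> complex) measure" where
  "dual_borel = sigma (topspace dual_topology) {S. openin dual_topology S}"

definition dual_prob_measure ::
    "('a::{topological_ab_group_add,t2_space} \<Rightarrow> complex) measure \<Rightarrow> bool" where
  "dual_prob_measure \<mu> \<longleftrightarrow>
     prob_space \<mu> \<and> space \<mu> = space dual_borel \<and> sets \<mu> = sets dual_borel \<and>
     (\<forall>E \<in> sets \<mu>.
        emeasure \<mu> E = (SUP K \<in> {K. compactin dual_topology K \<and> K \<subseteq> E}. emeasure \<mu> K) \<and>
        emeasure \<mu> E = (INF V \<in> {V. openin dual_topology V \<and> E \<subseteq> V}. emeasure \<mu> V))"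

definition fourier_stieltjes ::
    "('a \<Rightarrow> complex) measure \<Rightarrow> 'a \<Rightarrow> complex" where
  "fourier_stieltjes \<mu> x = (\<integral>\<gamma>. cnj (\<gamma> x) \<partial>\<mu>)"

definition characteristic_function ::
    "('a::{topological_ab_group_add,t2_space} \<Rightarrow> complex) \<Rightarrow> bool" where
  "characteristic_function g \<longleftrightarrow> (\<exists>\<nu>. dual_prob_measure \<nu> \<and> g = fourier_stieltjes \<nu>)"

end

theory Submission
  imports Defs
begin

typedef 'a cfw = "UNIV :: ('a \<Rightarrow> complex) set" morphisms cfw_rep cfw_abs by auto

lemma cfw_rep_surj: "range cfw_rep = UNIV"
  by (metis cfw_abs_inverse iso_tuple_UNIV_I surj_def)

lemma cfw_rep_inj: "inj cfw_rep"
  by (meson cfw_rep_inject injI)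

instantiation cfw :: (type) topological_space
begin
definition open_cfw_def: "open S \<longleftrightarrow> open (cfw_rep ` S)"
instance
proof
  show "open (UNIV :: 'a cfw set)" by (simp add: open_cfw_def cfw_rep_surj)
next
  fix S T :: "'a cfw set" assume "open S" "open T"
  then show "open (S \<inter> T)"
    by (simp add: open_cfw_def image_Int[OF cfw_rep_inj] open_Int)
next
  fix K :: "'a cfw set set" assume "\<forall>S\<in>K. open S"
  then show "open (\<Union>K)"
    by (auto simp: open_cfw_def image_Union intro!: open_Union)
qed
end

lemma open_vimage_cfw_rep: "open B \<Longrightarrow> open (cfw_rep -` B)"
  by (simp add: open_cfw_def image_vimage_eq cfw_rep_surj)

lemma HS: "Hausdorff_space (euclidean :: ('a \<Rightarrow> complex) topology)"
proof -
  have "Hausdorff_space (product_topology (\<lambda>i. euclidean::complex topology) (UNIV::'a set))"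
    by (rule Hausdorff_space_product_topology[THEN iffD2]) simp
  then show ?thesis
    by (simp add: euclidean_product_topology)
qed
lemma HS2: "x \<noteq> y \<Longrightarrow> \<exists>U V. open U \<and> open V \<and> x \<in> U \<and> y \<in> V \<and> U \<inter> V = {}" for x y :: "'a \<Rightarrow> complex"
proof -
  assume ne: "x \<noteq> y"
  have "\<exists>U V. openin euclidean U \<and> openin euclidean V \<and> x \<in> U \<and> y \<in> V \<and> disjnt U V"
    by (rule HS[unfolded Hausdorff_space_def, rule_format]) (simp_all add: ne)
  then obtain U V where UV: "openin euclidean U" "openin euclidean V" "x \<in> U" "y \<in> V" "disjnt U V"
    by blast
  show ?thesis
    apply (rule exI[of _ U], rule exI[of _ V])
    using open_openin[THEN iffD2, OF UV(1)] open_openin[THEN iffD2, OF UV(2)] UV(3-5)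
    by (simp add: disjnt_def)
qed
instance cfw :: (type) t2_space
proof
  fix x y :: "'a cfw" assume "x \<noteq> y"
  then have ne: "cfw_rep x \<noteq> cfw_rep y" by (simp add: cfw_rep_inject)
  obtain U V where UV: "open U" "open V" "cfw_rep x \<in> U" "cfw_rep y \<in> V" "U \<inter> V = {}"
    using HS2[OF ne] by blast
  have "open (cfw_rep -` U)" by (rule open_vimage_cfw_rep[OF UV(1)])
  moreover have "open (cfw_rep -` V)" by (rule open_vimage_cfw_rep[OF UV(2)])
  moreover have "x \<in> cfw_rep -` U" using UV(3) by simp
  moreover have "y \<in> cfw_rep -` V" using UV(4) by simp
  moreover have "cfw_rep -` U \<inter> cfw_rep -` V = {}" using UV(5) by blast
  ultimately show "\<exists>U V. open U \<and> open V \<and> x \<in> U \<and> y \<in> V \<and> U \<inter> V = {}"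
    by blast
qed

lemma continuous_cfw_rep: "continuous_on UNIV cfw_rep"
  by (simp add: continuous_on_open_vimage open_vimage_cfw_rep)

lemma cfw_abs_vimage: "cfw_abs -` B = cfw_rep ` B"
proof (intro set_eqI iffI)
  fix y assume "y \<in> cfw_abs -` B"
  then have "cfw_abs y \<in> B" by simp
  moreover have "cfw_rep (cfw_abs y) = y" by (simp add: cfw_abs_inverse)
  ultimately show "y \<in> cfw_rep ` B" by (metis image_eqI)
next
  fix y assume "y \<in> cfw_rep ` B"
  then obtain b where "b \<in> B" "y = cfw_rep b" by blast
  then show "y \<in> cfw_abs -` B" by (simp add: cfw_rep_inverse)
qed

lemma continuous_cfw_abs: "continuous_on UNIV cfw_abs"
  unfolding continuous_on_open_vimage[OF open_UNIV]
proof (intro allI impI)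
  fix B :: "'a cfw set" assume "open B"
  then have "open (cfw_rep ` B)" by (simp only: open_cfw_def)
  then show "open (cfw_abs -` B \<inter> UNIV)" by (simp only: cfw_abs_vimage Int_UNIV_right)
qed

lemma SW_fun:
  fixes R :: "(('a \<Rightarrow> complex) \<Rightarrow> real) set" and T :: "('a \<Rightarrow> complex) set"
  assumes T: "compact T"
    and cont: "\<And>f. f \<in> R \<Longrightarrow> continuous_on T f"
    and add: "\<And>f g. f \<in> R \<Longrightarrow> g \<in> R \<Longrightarrow> (\<lambda>x. f x + g x) \<in> R"
    and mult: "\<And>f g. f \<in> R \<Longrightarrow> g \<in> R \<Longrightarrow> (\<lambda>x. f x * g x) \<in> R"
    and const: "\<And>c. (\<lambda>_. c) \<in> R"
    and sep: "\<And>x y. x \<in> T \<Longrightarrow> y \<in> T \<Longrightarrow> x \<noteq> y \<Longrightarrow> \<exists>f\<in>R. f x \<noteq> f y"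
    and h: "continuous_on T h" and e: "e > 0"
  shows "\<exists>g\<in>R. \<forall>x\<in>T. \<bar>h x - g x\<bar> < e"
proof -
  define R' where "R' = (\<lambda>f. f \<circ> cfw_rep) ` R"
  define S where "S = cfw_abs ` T"
  have repS: "cfw_rep ` S = T"
    by (force simp: S_def cfw_abs_inverse image_image)
  have contS: "continuous_on S (f \<circ> cfw_rep)" if "continuous_on T f" for f :: "_ \<Rightarrow> real"
    by (rule continuous_on_compose) (auto intro: continuous_on_subset[OF continuous_cfw_rep] simp: repS that)
  interpret function_ring_on R' S
  proof
    show "compact S" unfolding S_def
      by (rule compact_continuous_image[OF continuous_on_subset[OF continuous_cfw_abs] T]) auto
  next
    fix f assume "f \<in> R'" then show "continuous_on S f"
      using contS cont by (auto simp: R'_def)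
  next
    fix f g assume "f \<in> R'" "g \<in> R'" then show "(\<lambda>x. f x + g x) \<in> R'"
    proof -
      obtain f0 g0 where "f0 \<in> R" "g0 \<in> R" "f = f0 \<circ> cfw_rep" "g = g0 \<circ> cfw_rep"
        using \<open>f \<in> R'\<close> \<open>g \<in> R'\<close> unfolding R'_def by auto
      then have "(\<lambda>x. f x + g x) = (\<lambda>x. f0 x + g0 x) \<circ> cfw_rep" by auto
      then show ?thesis unfolding R'_def using add[OF \<open>f0 \<in> R\<close> \<open>g0 \<in> R\<close>] by blast
    qed
  next
    fix f g assume "f \<in> R'" "g \<in> R'" then show "(\<lambda>x. f x * g x) \<in> R'"
    proof -
      obtain f0 g0 where "f0 \<in> R" "g0 \<in> R" "f = f0 \<circ> cfw_rep" "g = g0 \<circ> cfw_rep"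
        using \<open>f \<in> R'\<close> \<open>g \<in> R'\<close> unfolding R'_def by auto
      then have "(\<lambda>x. f x * g x) = (\<lambda>x. f0 x * g0 x) \<circ> cfw_rep" by auto
      then show ?thesis unfolding R'_def using mult[OF \<open>f0 \<in> R\<close> \<open>g0 \<in> R\<close>] by blast
    qed
  next
    fix c :: real have "(\<lambda>_. c) = (\<lambda>_. c) \<circ> cfw_rep" by auto
    then show "(\<lambda>_. c) \<in> R'" unfolding R'_def using const by blast
  next
    fix x y assume "x \<in> S" "y \<in> S" "x \<noteq> y"
    then have "cfw_rep x \<in> T" "cfw_rep y \<in> T" "cfw_rep x \<noteq> cfw_rep y"
      using repS cfw_rep_inject by blast+
    then show "\<exists>f\<in>R'. f x \<noteq> f y" using sep unfolding R'_def by fastforce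
  qed
  obtain g where "g \<in> R'" and g: "\<forall>x\<in>S. \<bar>(h \<circ> cfw_rep) x - g x\<bar> < e"
    using Stone_Weierstrass_basic[OF contS[OF h] e] by blast
  then obtain g0 where g0: "g0 \<in> R" "g = g0 \<circ> cfw_rep" unfolding R'_def by auto
  have "\<forall>x\<in>T. \<bar>h x - g0 x\<bar> < e"
  proof
    fix x assume "x \<in> T"
    then have "cfw_abs x \<in> S" by (simp add: S_def)
    then show "\<bar>h x - g0 x\<bar> < e" using g g0 by (auto simp: cfw_abs_inverse)
  qed
  then show ?thesis using g0 by blast
qed

definition TT :: "('a \<Rightarrow> complex) set" where
  "TT = {h. \<forall>x. h x \<in> sphere 0 1}"

lemma TT_compact: "compact (TT :: ('a \<Rightarrow> complex) set)"
proof -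
  have "(TT :: ('a \<Rightarrow> complex) set) = PiE UNIV (\<lambda>_. sphere 0 1)" by (auto simp: TT_def PiE_def extensional_def)
  moreover have "compactin (product_topology (\<lambda>_. euclidean) UNIV) (PiE UNIV (\<lambda>_::'a. sphere (0::complex) 1))"
    by (simp add: compactin_PiE)
  ultimately show ?thesis by (simp add: euclidean_product_topology)
qed

context
  fixes dummy :: "'a::{topological_ab_group_add,t2_space}"
begin

lemma dual_topspace: "topspace (dual_topology :: ('a \<Rightarrow> complex) topology) = dual_group"
proof -
  have "\<Union>{{\<gamma> \<in> (dual_group :: ('a \<Rightarrow> complex) set). \<gamma> ` K \<subseteq> V} | K V. compact K \<and> open V} = dual_group"
  proof
    have "{\<gamma> \<in> (dual_group :: ('a \<Rightarrow> complex) set). \<gamma> ` {} \<subseteq> UNIV} \<in> {{\<gamma> \<in> (dual_group :: ('a \<Rightarrow> complex) set). \<gamma> ` K \<subseteq> V} | K V. compact K \<and> open V}"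
      by (intro CollectI exI[of _ "{}"] exI[of _ UNIV]) auto
    then show "dual_group \<subseteq> \<Union>{{\<gamma> \<in> (dual_group :: ('a \<Rightarrow> complex) set). \<gamma> ` K \<subseteq> V} | K V. compact K \<and> open V}"
      by blast
  qed blast
  then show ?thesis unfolding dual_topology_def by simp
qed

lemma openin_dual_eval:
  assumes "open V"
  shows "openin (dual_topology :: ('a \<Rightarrow> complex) topology) {\<gamma> \<in> dual_group. \<gamma> x \<in> V}"
proof -
  have eq: "{\<gamma> \<in> (dual_group :: ('a \<Rightarrow> complex) set). \<gamma> x \<in> V} = {\<gamma> \<in> dual_group. \<gamma> ` {x} \<subseteq> V}" by auto
  have "{\<gamma> \<in> (dual_group :: ('a \<Rightarrow> complex) set). \<gamma> ` {x} \<subseteq> V} \<in> {{\<gamma> \<in> (dual_group :: ('a \<Rightarrow> complex) set). \<gamma> ` K \<subseteq> V} | K V. compact K \<and> open V}"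
    using assms by (intro CollectI exI[of _ "{x}"] exI[of _ V]) auto
  then show ?thesis unfolding eq dual_topology_def openin_topology_generated_by_iff
    by (rule generate_topology_on.Basis)
qed

lemma dual_cont_id: "continuous_map (dual_topology :: ('a \<Rightarrow> complex) topology) euclidean (\<lambda>\<gamma>. \<gamma>)"
proof -
  have "continuous_map (dual_topology :: ('a \<Rightarrow> complex) topology) euclidean (\<lambda>\<gamma>. \<gamma> k)" for k
    unfolding continuous_map_def
  proof (intro conjI allI impI)
    fix U :: "complex set" assume "openin euclidean U"
    then have "open U" by (rule open_openin[THEN iffD2])
    then show "openin dual_topology {x \<in> topspace (dual_topology :: ('a \<Rightarrow> complex) topology). x k \<in> U}"
      unfolding dual_topspace by (rule openin_dual_eval)
  qed auto
  then have "continuous_map (dual_topology :: ('a \<Rightarrow> complex) topology) (product_topology (\<lambda>_. euclidean) UNIV) (\<lambda>\<gamma>. \<gamma>)"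
    by (simp add: continuous_map_componentwise_UNIV)
  then show ?thesis by (simp add: euclidean_product_topology)
qed

lemma dual_compact: "compactin (dual_topology :: ('a \<Rightarrow> complex) topology) K \<Longrightarrow> compact K"
  using image_compactin[OF _ dual_cont_id] by fastforce

lemma dual_openin_open: "open W \<Longrightarrow> openin (dual_topology :: ('a \<Rightarrow> complex) topology) (W \<inter> dual_group)"
proof -
  assume "open W"
  then have "openin euclidean W" by (rule open_openin[THEN iffD1])
  then have "openin (dual_topology :: ('a \<Rightarrow> complex) topology) {x \<in> topspace dual_topology. x \<in> W}"
    using dual_cont_id unfolding continuous_map_def by blast
  moreover have "{x \<in> topspace (dual_topology :: ('a \<Rightarrow> complex) topology). x \<in> W} = W \<inter> dual_group"
    unfolding dual_topspace by blast
  ultimately show ?thesis by simp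
qed

lemma dual_borel_space: "space (dual_borel :: ('a \<Rightarrow> complex) measure) = dual_group"
  and dual_borel_sets: "sets (dual_borel :: ('a \<Rightarrow> complex) measure) = sigma_sets dual_group {S. openin dual_topology S}"
proof -
  have sub: "{S. openin (dual_topology :: ('a \<Rightarrow> complex) topology) S} \<subseteq> Pow (topspace dual_topology)"
    using openin_subset by blast
  show "space (dual_borel :: ('a \<Rightarrow> complex) measure) = dual_group"
    unfolding dual_borel_def using space_measure_of[OF sub] dual_topspace by simp
  show "sets (dual_borel :: ('a \<Rightarrow> complex) measure) = sigma_sets dual_group {S. openin dual_topology S}"
    unfolding dual_borel_def using sets_measure_of[OF sub] dual_topspace by simp
qed

lemma dual_openin_sets: "openin (dual_topology :: ('a \<Rightarrow> complex) topology) S \<Longrightarrow> S \<in> sets dual_borel"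
  unfolding dual_borel_sets by (rule sigma_sets.Basic) simp

lemma dual_closed_sets: "closed W \<Longrightarrow> W \<inter> (dual_group :: ('a \<Rightarrow> complex) set) \<in> sets dual_borel"
proof -
  assume "closed W"
  then have "open (- W)" by (simp add: open_Compl)
  then have "(- W) \<inter> (dual_group :: ('a \<Rightarrow> complex) set) \<in> sets dual_borel"
    by (intro dual_openin_sets dual_openin_open)
  then have "dual_group - ((- W) \<inter> (dual_group :: ('a \<Rightarrow> complex) set)) \<in> sets dual_borel"
    unfolding dual_borel_sets by (rule sigma_sets.Compl)
  moreover have "dual_group - ((- W) \<inter> (dual_group :: ('a \<Rightarrow> complex) set)) = W \<inter> dual_group" by blast
  ultimately show ?thesis by simp
qed

lemma compact_closed_fun: "compact (K :: ('b \<Rightarrow> complex) set) \<Longrightarrow> closed K"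
proof -
  assume "compact K"
  then have "compactin euclidean K" by simp
  then have "closedin euclidean K" by (rule compactin_imp_closedin[OF HS])
  then show "closed K" by (rule closed_closedin[THEN iffD2])
qed

lemma dual_compact_sets: "compact K \<Longrightarrow> K \<subseteq> (dual_group :: ('a \<Rightarrow> complex) set) \<Longrightarrow> K \<in> sets dual_borel"
  using dual_closed_sets[OF compact_closed_fun, of K] by (simp add: Int_absorb2)

lemma dual_measurable:
  fixes h :: "('a \<Rightarrow> complex) \<Rightarrow> 'c::topological_space"
  assumes "continuous_on T h" "dual_group \<subseteq> T"
  shows "h \<in> borel_measurable dual_borel"
proof (rule borel_measurableI)
  fix S :: "'c set" assume "open S"
  then obtain A where A: "open A" "A \<inter> T = h -` S \<inter> T"
    using assms(1) unfolding continuous_on_open_invariant by blast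
  then have "h -` S \<inter> space dual_borel = A \<inter> dual_group"
    using assms(2) unfolding dual_borel_space by blast
  then show "h -` S \<inter> space dual_borel \<in> sets dual_borel"
    using dual_openin_sets[OF dual_openin_open[OF A(1)]] by simp
qed

end

lemma dual_neg_neg [simp]: "dual_neg (dual_neg \<gamma>) = \<gamma>"
  by (simp add: dual_neg_def)

lemma dual_neg_TT: "h \<in> TT \<Longrightarrow> dual_neg h \<in> TT"
  by (simp add: TT_def dual_neg_def)

lemma dual_neg_cont: "continuous_on UNIV (dual_neg :: ('b \<Rightarrow> complex) \<Rightarrow> _)"
proof -
  have c: "continuous_on UNIV (\<lambda>\<gamma>::'b \<Rightarrow> complex. cnj (\<gamma> k))" for k
    by (rule continuous_on_cnj[OF continuous_on_product_coordinates])
  have "continuous_map euclidean euclidean (\<lambda>\<gamma>::'b \<Rightarrow> complex. cnj (\<gamma> k))" for k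
    using c[of k] by (simp only: continuous_map_iff_continuous2)
  then have "continuous_map euclidean (product_topology (\<lambda>_. euclidean) UNIV) (dual_neg :: ('b \<Rightarrow> complex) \<Rightarrow> _)"
    unfolding continuous_map_componentwise_UNIV dual_neg_def by blast
  then have "continuous_map euclidean euclidean (dual_neg :: ('b \<Rightarrow> complex) \<Rightarrow> _)"
    by (simp only: euclidean_product_topology)
  then show ?thesis
    by (simp only: continuous_map_iff_continuous2)
qed

lemma urysohn_TT:
  fixes K C :: "('b \<Rightarrow> complex) set"
  assumes "compact K" "compact C" "K \<subseteq> TT" "C \<subseteq> TT" "K \<inter> C = {}"
  obtains h :: "('b \<Rightarrow> complex) \<Rightarrow> real" where "continuous_on TT h" "\<And>x. x \<in> TT \<Longrightarrow> 0 \<le> h x \<and> h x \<le> 1"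
    "\<And>x. x \<in> K \<Longrightarrow> h x = 1" "\<And>x. x \<in> C \<Longrightarrow> h x = 0"
proof -
  define X where "X = subtopology (euclidean :: ('b \<Rightarrow> complex) topology) TT"
  have "compactin euclidean (TT :: ('b \<Rightarrow> complex) set)"
    using TT_compact by (simp only: compactin_euclidean_iff)
  then have "compact_space X" unfolding X_def
    by (rule compact_space_subtopology)
  moreover have "Hausdorff_space X" unfolding X_def by (rule Hausdorff_space_subtopology[OF HS])
  ultimately have "normal_space X" using compact_Hausdorff_or_regular_imp_normal_space by blast
  have cl: "closedin X S" if "compact S" "S \<subseteq> TT" for S
  proof -
    have "closedin euclidean S" by (rule closed_closedin[THEN iffD1, OF compact_closed_fun[OF that(1)]])
    moreover have "S = S \<inter> TT" using that(2) by blast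
    ultimately show ?thesis unfolding X_def closedin_subtopology by blast
  qed
  have dj: "disjnt C K" using assms(5) unfolding disjnt_def by blast
  obtain f where f: "continuous_map X (top_of_set {0..1::real}) f" "f ` C \<subseteq> {0}" "f ` K \<subseteq> {1}"
    using Urysohn_lemma[OF \<open>normal_space X\<close> cl[OF assms(2,4)] cl[OF assms(1,3)] dj, of 0 1] by auto
  have "continuous_map X euclidean f" using f(1) continuous_map_in_subtopology by blast
  then have "continuous_on TT f" unfolding X_def continuous_map_iff_continuous .
  moreover have "0 \<le> f x \<and> f x \<le> 1" if "x \<in> TT" for x
  proof -
    have "x \<in> topspace X" unfolding X_def using that by (simp only: topspace_subtopology topspace_euclidean) blast
    then have "f x \<in> topspace (top_of_set {0..1::real})"
      using continuous_map_image_subset_topspace[OF f(1)] by blast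
    then show ?thesis by (simp only: topspace_subtopology topspace_euclidean) simp
  qed
  moreover have "\<And>x. x \<in> K \<Longrightarrow> f x = 1" "\<And>x. x \<in> C \<Longrightarrow> f x = 0" using f(2,3) by blast+
  ultimately show ?thesis by (rule that)
qed

context
  fixes dummy :: "'a::{topological_ab_group_add,t2_space}"
begin

lemma dual_group_TT: "(dual_group :: ('a \<Rightarrow> complex) set) \<subseteq> TT"
  by (auto simp: dual_group_def TT_def)

lemma dual_group_mult: "\<gamma> \<in> (dual_group :: ('a \<Rightarrow> complex) set) \<Longrightarrow> \<gamma> (x + y) = \<gamma> x * \<gamma> y"
  by (simp add: dual_group_def)

lemma dual_group_norm: "\<gamma> \<in> (dual_group :: ('a \<Rightarrow> complex) set) \<Longrightarrow> norm (\<gamma> x) = 1"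
  by (simp add: dual_group_def)

lemma dual_group_zero: "\<gamma> \<in> (dual_group :: ('a \<Rightarrow> complex) set) \<Longrightarrow> \<gamma> 0 = 1"
proof -
  assume g: "\<gamma> \<in> dual_group"
  have "\<gamma> 0 * 1 = \<gamma> 0 * \<gamma> 0" using dual_group_mult[OF g, of 0 0] by simp
  moreover have "\<gamma> 0 \<noteq> 0" using dual_group_norm[OF g, of 0] by auto
  ultimately show "\<gamma> 0 = 1" by (metis mult_left_cancel)
qed

lemma dual_group_minus: "\<gamma> \<in> (dual_group :: ('a \<Rightarrow> complex) set) \<Longrightarrow> \<gamma> (- x) = cnj (\<gamma> x)"
proof -
  assume g: "\<gamma> \<in> dual_group"
  have "\<gamma> x * \<gamma> (- x) = 1" using dual_group_mult[OF g, of x "-x"] dual_group_zero[OF g] by simp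
  moreover have "\<gamma> x * cnj (\<gamma> x) = 1"
    using dual_group_norm[OF g, of x] by (simp add: complex_mult_cnj cmod_def)
  moreover have "\<gamma> x \<noteq> 0" using dual_group_norm[OF g, of x] by auto
  ultimately show ?thesis by (metis mult_left_cancel)
qed

lemma dual_neg_in: "\<gamma> \<in> (dual_group :: ('a \<Rightarrow> complex) set) \<Longrightarrow> dual_neg \<gamma> \<in> dual_group"
proof -
  assume g: "\<gamma> \<in> dual_group"
  have "continuous_on UNIV \<gamma>" using g by (simp add: dual_group_def)
  then have "continuous_on UNIV (\<lambda>x. cnj (\<gamma> x))" by (intro continuous_on_cnj)
  then show ?thesis using g by (simp add: dual_group_def dual_neg_def)
qed

end

inductive_set Cp :: "(('b \<Rightarrow> complex) \<Rightarrow> complex) set" where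
  Cp_const: "(\<lambda>_. c) \<in> Cp"
| Cp_ev: "(\<lambda>\<gamma>. \<gamma> x) \<in> Cp"
| Cp_evc: "(\<lambda>\<gamma>. cnj (\<gamma> x)) \<in> Cp"
| Cp_add: "P \<in> Cp \<Longrightarrow> Q \<in> Cp \<Longrightarrow> (\<lambda>\<gamma>. P \<gamma> + Q \<gamma>) \<in> Cp"
| Cp_mult: "P \<in> Cp \<Longrightarrow> Q \<in> Cp \<Longrightarrow> (\<lambda>\<gamma>. P \<gamma> * Q \<gamma>) \<in> Cp"

lemma Cp_cnj: "P \<in> Cp \<Longrightarrow> (\<lambda>\<gamma>. cnj (P \<gamma>)) \<in> Cp"
proof (induction rule: Cp.induct)
  case (Cp_const c) show ?case by (rule Cp.Cp_const)
next
  case (Cp_ev x) show ?case by (rule Cp.Cp_evc)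
next
  case (Cp_evc x) show ?case using Cp.Cp_ev[of x] by simp
next
  case (Cp_add P Q) then show ?case using Cp.Cp_add by fastforce
next
  case (Cp_mult P Q) then show ?case using Cp.Cp_mult by fastforce
qed

lemma Cp_cont: "P \<in> Cp \<Longrightarrow> continuous_on UNIV P"
proof (induction rule: Cp.induct)
  case (Cp_const c) show ?case by (rule continuous_on_const)
next
  case (Cp_ev x) show ?case by (rule continuous_on_product_coordinates)
next
  case (Cp_evc x) show ?case by (rule continuous_on_cnj[OF continuous_on_product_coordinates])
next
  case (Cp_add P Q) show ?case using Cp_add.IH by (rule continuous_on_add)
next
  case (Cp_mult P Q) show ?case using Cp_mult.IH by (rule continuous_on_mult)
qed

definition Rp :: "(('b \<Rightarrow> complex) \<Rightarrow> real) set" where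
  "Rp = {(\<lambda>\<gamma>. Re (P \<gamma>)) | P. P \<in> Cp}"

lemma Re_mult_half: "Re a * Re b = Re (complex_of_real (1/2) * (a*b + a * cnj b))"
proof -
  have "Re (complex_of_real (1/2) * (a*b + a * cnj b)) = (Re a * Re b - Im a * Im b) / 2 + (Im a * Im b + Re a * Re b) / 2"
    by (simp add: algebra_simps)
  also have "\<dots> = Re a * Re b" by (simp add: field_simps)
  finally show ?thesis by simp
qed

lemma Rp_I: "P \<in> Cp \<Longrightarrow> f = (\<lambda>\<gamma>. Re (P \<gamma>)) \<Longrightarrow> f \<in> Rp"
  unfolding Rp_def by blast

lemma Rp_approx:
  fixes h :: "('b \<Rightarrow> complex) \<Rightarrow> real"
  assumes "continuous_on TT h" "e > 0"
  shows "\<exists>P\<in>Cp. \<forall>x\<in>TT. \<bar>h x - Re (P x)\<bar> < e"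
proof -
  have "\<exists>g\<in>Rp. \<forall>x\<in>TT. \<bar>h x - g x\<bar> < e"
  proof (rule SW_fun[OF TT_compact _ _ _ _ _ assms])
    fix f :: "('b \<Rightarrow> complex) \<Rightarrow> real" assume "f \<in> Rp"
    then obtain P :: "('b \<Rightarrow> complex) \<Rightarrow> complex" where "P \<in> Cp" "f = (\<lambda>\<gamma>. Re (P \<gamma>))" unfolding Rp_def by blast
    then show "continuous_on TT f"
      using continuous_on_Re[OF continuous_on_subset[OF Cp_cont]] by blast
  next
    fix f g :: "('b \<Rightarrow> complex) \<Rightarrow> real" assume "f \<in> Rp" "g \<in> Rp"
    then obtain P Q :: "('b \<Rightarrow> complex) \<Rightarrow> complex" where PQ: "P \<in> Cp" "f = (\<lambda>\<gamma>. Re (P \<gamma>))" "Q \<in> Cp" "g = (\<lambda>\<gamma>. Re (Q \<gamma>))"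
      unfolding Rp_def by blast
    have "(\<lambda>\<gamma>. P \<gamma> + Q \<gamma>) \<in> Cp" using PQ by (intro Cp_add)
    moreover have "(\<lambda>x. f x + g x) = (\<lambda>\<gamma>. Re (P \<gamma> + Q \<gamma>))" using PQ by simp
    ultimately show "(\<lambda>x. f x + g x) \<in> Rp" by (rule Rp_I)
  next
    fix f g :: "('b \<Rightarrow> complex) \<Rightarrow> real" assume "f \<in> Rp" "g \<in> Rp"
    then obtain P Q :: "('b \<Rightarrow> complex) \<Rightarrow> complex" where PQ: "P \<in> Cp" "f = (\<lambda>\<gamma>. Re (P \<gamma>))" "Q \<in> Cp" "g = (\<lambda>\<gamma>. Re (Q \<gamma>))"
      unfolding Rp_def by blast
    define R where "R = (\<lambda>\<gamma>. (\<lambda>_. complex_of_real (1/2)) \<gamma> * ((\<lambda>\<gamma>. P \<gamma> * Q \<gamma>) \<gamma> + (\<lambda>\<gamma>. P \<gamma> * cnj (Q \<gamma>)) \<gamma>))"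
    have "R \<in> Cp" unfolding R_def
      using PQ by (intro Cp_mult Cp_const Cp_add Cp_cnj) auto
    moreover have "(\<lambda>x. f x * g x) = (\<lambda>\<gamma>. Re (R \<gamma>))"
      unfolding PQ(2,4) R_def by (rule ext) (rule Re_mult_half)
    ultimately show "(\<lambda>x. f x * g x) \<in> Rp" by (rule Rp_I)
  next
    fix c :: real
    have "(\<lambda>_. c) = (\<lambda>\<gamma>. Re ((\<lambda>_. complex_of_real c) \<gamma>))" by simp
    then show "(\<lambda>_. c) \<in> Rp" by (rule Rp_I[OF Cp_const])
  next
    fix x y :: "'b \<Rightarrow> complex" assume "x \<noteq> y"
    then obtain k where k: "x k \<noteq> y k" by blast
    show "\<exists>f\<in>Rp. f x \<noteq> f y"
    proof (cases "Re (x k) = Re (y k)")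
      case False
      have "(\<lambda>\<gamma>. Re (\<gamma> k)) \<in> Rp" by (rule Rp_I[OF Cp_ev[of k]]) simp
      then show ?thesis using False by (intro bexI[of _ "\<lambda>\<gamma>. Re (\<gamma> k)"]) simp_all
    next
      case True
      then have "Im (x k) \<noteq> Im (y k)" using k complex_eqI by blast
      moreover have "(\<lambda>\<gamma>. Re ((\<lambda>_. - \<i>) \<gamma> * (\<lambda>\<gamma>. \<gamma> k) \<gamma>)) \<in> Rp"
        by (rule Rp_I[OF Cp_mult[OF Cp_const[of "- \<i>"] Cp_ev[of k]]]) simp
      ultimately show ?thesis by (intro bexI[of _ "\<lambda>\<gamma>. Re ((\<lambda>_. - \<i>) \<gamma> * (\<lambda>\<gamma>. \<gamma> k) \<gamma>)"]) simp_all
    qed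
  qed
  then obtain g where g: "g \<in> Rp" "\<forall>x\<in>TT. \<bar>h x - g x\<bar> < e" by blast
  then obtain P where "P \<in> Cp" "g = (\<lambda>\<gamma>. Re (P \<gamma>))" unfolding Rp_def by blast
  then show ?thesis using g(2) by (intro bexI[of _ P]) simp_all
qed

inductive_set Lin :: "(('b \<Rightarrow> complex) \<Rightarrow> complex) set" where
  Lin_zero: "(\<lambda>_. 0) \<in> Lin"
| Lin_term: "(\<lambda>\<gamma>. a * cnj (\<gamma> x)) \<in> Lin"
| Lin_add: "P \<in> Lin \<Longrightarrow> Q \<in> Lin \<Longrightarrow> (\<lambda>\<gamma>. P \<gamma> + Q \<gamma>) \<in> Lin"

context
  fixes dummy :: "'a::{topological_ab_group_add,t2_space}"
begin

lemma Lin_mult_term: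
  "Q \<in> (Lin :: (('a \<Rightarrow> complex) \<Rightarrow> complex) set) \<Longrightarrow>
   \<exists>R\<in>Lin. \<forall>\<gamma>\<in>dual_group. a * cnj (\<gamma> x) * Q \<gamma> = R \<gamma>"
proof (induction rule: Lin.induct)
  case Lin_zero then show ?case using Lin.Lin_zero by force
next
  case (Lin_term b y)
  have "\<forall>\<gamma>\<in>(dual_group :: ('a \<Rightarrow> complex) set). a * cnj (\<gamma> x) * (b * cnj (\<gamma> y)) = (a * b) * cnj (\<gamma> (x + y))"
    by (simp add: dual_group_mult)
  then show ?case by (intro bexI[of _ "\<lambda>\<gamma>. (a * b) * cnj (\<gamma> (x + y))"] Lin.Lin_term) auto
next
  case (Lin_add P Q)
  then obtain R1 R2 where "R1 \<in> Lin" "R2 \<in> Lin" "\<forall>\<gamma>\<in>(dual_group :: ('a \<Rightarrow> complex) set). a * cnj (\<gamma> x) * P \<gamma> = R1 \<gamma>"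
    "\<forall>\<gamma>\<in>(dual_group :: ('a \<Rightarrow> complex) set). a * cnj (\<gamma> x) * Q \<gamma> = R2 \<gamma>" by blast
  then show ?case
    by (intro bexI[of _ "\<lambda>\<gamma>. R1 \<gamma> + R2 \<gamma>"] Lin.Lin_add) (auto simp: distrib_left)
qed

lemma Lin_mult:
  "P \<in> (Lin :: (('a \<Rightarrow> complex) \<Rightarrow> complex) set) \<Longrightarrow> Q \<in> Lin \<Longrightarrow>
   \<exists>R\<in>Lin. \<forall>\<gamma>\<in>dual_group. P \<gamma> * Q \<gamma> = R \<gamma>"
proof (induction rule: Lin.induct)
  case Lin_zero then show ?case using Lin.Lin_zero by force
next
  case (Lin_term a x) then show ?case by (rule Lin_mult_term)
next
  case (Lin_add P1 P2)
  then obtain R1 R2 where "R1 \<in> Lin" "R2 \<in> Lin" "\<forall>\<gamma>\<in>(dual_group :: ('a \<Rightarrow> complex) set). P1 \<gamma> * Q \<gamma> = R1 \<gamma>"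
    "\<forall>\<gamma>\<in>(dual_group :: ('a \<Rightarrow> complex) set). P2 \<gamma> * Q \<gamma> = R2 \<gamma>" by blast
  then show ?case
    by (intro bexI[of _ "\<lambda>\<gamma>. R1 \<gamma> + R2 \<gamma>"] Lin.Lin_add) (auto simp: distrib_right)
qed

lemma Cp_Lin: "P \<in> Cp \<Longrightarrow> \<exists>Q\<in>(Lin :: (('a \<Rightarrow> complex) \<Rightarrow> complex) set). \<forall>\<gamma>\<in>dual_group. P \<gamma> = Q \<gamma>"
proof (induction rule: Cp.induct)
  case (Cp_const c)
  have "\<forall>\<gamma>\<in>(dual_group :: ('a \<Rightarrow> complex) set). c = c * cnj (\<gamma> 0)" by (simp add: dual_group_zero)
  then show ?case by (intro bexI[of _ "\<lambda>\<gamma>. c * cnj (\<gamma> 0)"] Lin.Lin_term) auto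
next
  case (Cp_ev x)
  have "\<forall>\<gamma>\<in>(dual_group :: ('a \<Rightarrow> complex) set). \<gamma> x = 1 * cnj (\<gamma> (- x))" by (simp add: dual_group_minus)
  then show ?case by (intro bexI[of _ "\<lambda>\<gamma>. 1 * cnj (\<gamma> (- x))"] Lin.Lin_term) auto
next
  case (Cp_evc x)
  have "\<forall>\<gamma>\<in>(dual_group :: ('a \<Rightarrow> complex) set). cnj (\<gamma> x) = 1 * cnj (\<gamma> x)" by simp
  then show ?case by (intro bexI[of _ "\<lambda>\<gamma>. 1 * cnj (\<gamma> x)"] Lin.Lin_term) auto
next
  case (Cp_add P Q)
  then obtain R1 R2 where "R1 \<in> Lin" "R2 \<in> Lin" "\<forall>\<gamma>\<in>(dual_group :: ('a \<Rightarrow> complex) set). P \<gamma> = R1 \<gamma>"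
    "\<forall>\<gamma>\<in>(dual_group :: ('a \<Rightarrow> complex) set). Q \<gamma> = R2 \<gamma>" by blast
  then show ?case
    by (intro bexI[of _ "\<lambda>\<gamma>. R1 \<gamma> + R2 \<gamma>"] Lin.Lin_add) auto
next
  case (Cp_mult P Q)
  then obtain R1 R2 where R: "R1 \<in> Lin" "R2 \<in> Lin" "\<forall>\<gamma>\<in>(dual_group :: ('a \<Rightarrow> complex) set). P \<gamma> = R1 \<gamma>"
    "\<forall>\<gamma>\<in>(dual_group :: ('a \<Rightarrow> complex) set). Q \<gamma> = R2 \<gamma>" by blast
  obtain R where "R \<in> Lin" "\<forall>\<gamma>\<in>(dual_group :: ('a \<Rightarrow> complex) set). R1 \<gamma> * R2 \<gamma> = R \<gamma>"
    using Lin_mult[OF R(1,2)] by blast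
  then show ?case using R by auto
qed

end

lemma Lin_cont: "P \<in> Lin \<Longrightarrow> continuous_on UNIV P"
proof (induction rule: Lin.induct)
  case Lin_zero show ?case by (rule continuous_on_const)
next
  case (Lin_term a x) show ?case
    by (intro continuous_on_mult continuous_on_const continuous_on_cnj continuous_on_product_coordinates)
next
  case (Lin_add P Q) show ?case using Lin_add.IH by (rule continuous_on_add)
qed

lemma cont_bounded_TT:
  fixes h :: "('b \<Rightarrow> complex) \<Rightarrow> 'c::real_normed_vector"
  assumes "continuous_on TT h"
  shows "\<exists>B. \<forall>x\<in>TT. norm (h x) \<le> B"
proof -
  have "compact (h ` TT)" by (rule compact_continuous_image[OF assms TT_compact])
  then have "bounded (h ` TT)" by (rule compact_imp_bounded)
  then show ?thesis unfolding bounded_iff by blast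
qed

lemma cont_neg_TT:
  assumes "continuous_on TT h"
  shows "continuous_on TT (\<lambda>\<gamma>. h (dual_neg \<gamma>))"
  by (rule continuous_on_compose2[OF assms continuous_on_subset[OF dual_neg_cont]]) (auto simp: dual_neg_TT)

context
  fixes dummy :: "'a::{topological_ab_group_add,t2_space}"
begin

lemma dpm:
  assumes "dual_prob_measure (M :: ('a \<Rightarrow> complex) measure)"
  shows "prob_space M" "space M = dual_group" "sets M = sets dual_borel"
  using assms unfolding dual_prob_measure_def by (simp_all add: dual_borel_space)

lemma dpm_finite:
  assumes "dual_prob_measure (M :: ('a \<Rightarrow> complex) measure)"
  shows "finite_measure M"
  using dpm(1)[OF assms] unfolding prob_space_def by blast

lemma integrable_TT:
  fixes h :: "('a \<Rightarrow> complex) \<Rightarrow> 'c::{banach,second_countable_topology}"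
  assumes M: "dual_prob_measure M" and h: "continuous_on TT h"
  shows "integrable M h"
proof -
  obtain B where B: "\<forall>x\<in>TT. norm (h x) \<le> B" using cont_bounded_TT[OF h] by blast
  have "h \<in> borel_measurable dual_borel" by (rule dual_measurable[OF h dual_group_TT])
  then have meas: "h \<in> borel_measurable M"
    using measurable_cong_sets[OF dpm(3)[OF M] refl] by blast
  have "AE x in M. norm (h x) \<le> B"
    by (rule AE_I2) (use B dual_group_TT dpm(2)[OF M] in blast)
  then show ?thesis by (rule finite_measure.integrable_const_bound[OF dpm_finite[OF M] _ meas])
qed

lemma fs_term:
  assumes M: "dual_prob_measure (M :: ('a \<Rightarrow> complex) measure)"
  shows "(\<integral>\<gamma>. a * cnj (\<gamma> x) - a * cnj (dual_neg \<gamma> x) \<partial>M)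
         = a * (complex_of_real (2 * Im (fourier_stieltjes M x)) * \<i>)"
proof -
  have c1: "continuous_on TT (\<lambda>\<gamma>::'a \<Rightarrow> complex. cnj (\<gamma> x))"
    by (rule continuous_on_subset[OF continuous_on_cnj[OF continuous_on_product_coordinates]]) simp
  have c2: "continuous_on TT (\<lambda>\<gamma>::'a \<Rightarrow> complex. \<gamma> x)"
    by (rule continuous_on_subset[OF continuous_on_product_coordinates]) simp
  have i1: "integrable M (\<lambda>\<gamma>. cnj (\<gamma> x))" by (rule integrable_TT[OF M c1])
  have i2: "integrable M (\<lambda>\<gamma>. \<gamma> x)" by (rule integrable_TT[OF M c2])
  have "(\<integral>\<gamma>. a * cnj (\<gamma> x) - a * cnj (dual_neg \<gamma> x) \<partial>M) = (\<integral>\<gamma>. a * cnj (\<gamma> x) - a * \<gamma> x \<partial>M)"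
    by (simp add: dual_neg_def)
  also have "\<dots> = (\<integral>\<gamma>. a * cnj (\<gamma> x) \<partial>M) - (\<integral>\<gamma>. a * \<gamma> x \<partial>M)"
    by (rule Bochner_Integration.integral_diff) (use i1 i2 in simp_all)
  also have "\<dots> = a * (\<integral>\<gamma>. cnj (\<gamma> x) \<partial>M) - a * (\<integral>\<gamma>. \<gamma> x \<partial>M)"
    by (simp add: i1 i2)
  also have "(\<integral>\<gamma>. \<gamma> x \<partial>M) = cnj (\<integral>\<gamma>. cnj (\<gamma> x) \<partial>M)"
    using Bochner_Integration.integral_cnj[of M "\<lambda>\<gamma>. cnj (\<gamma> x)"] by simp
  also have "(\<integral>\<gamma>. cnj (\<gamma> x) \<partial>M) = fourier_stieltjes M x" by (simp add: fourier_stieltjes_def)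
  finally show ?thesis by (simp add: complex_diff_cnj right_diff_distrib[symmetric])
qed

lemma Lin_ident:
  assumes \<mu>: "dual_prob_measure (\<mu> :: ('a \<Rightarrow> complex) measure)" and \<nu>: "dual_prob_measure \<nu>"
    and Im: "\<And>x. Im (fourier_stieltjes \<nu> x) = Im (fourier_stieltjes \<mu> x)"
  shows "Q \<in> (Lin :: (('a \<Rightarrow> complex) \<Rightarrow> complex) set) \<Longrightarrow>
    (\<integral>\<gamma>. Q \<gamma> - Q (dual_neg \<gamma>) \<partial>\<mu>) = (\<integral>\<gamma>. Q \<gamma> - Q (dual_neg \<gamma>) \<partial>\<nu>)"
proof (induction rule: Lin.induct)
  case Lin_zero show ?case by simp
next
  case (Lin_term a x)
  show ?case using fs_term[OF \<mu>, of a x] fs_term[OF \<nu>, of a x] Im[of x] by simp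
next
  case (Lin_add P Q)
  have cP: "continuous_on TT (\<lambda>\<gamma>. P \<gamma> - P (dual_neg \<gamma>))"
    by (intro continuous_on_diff cont_neg_TT continuous_on_subset[OF Lin_cont[OF Lin_add.hyps(1)]]) simp_all
  have cQ: "continuous_on TT (\<lambda>\<gamma>. Q \<gamma> - Q (dual_neg \<gamma>))"
    by (intro continuous_on_diff cont_neg_TT continuous_on_subset[OF Lin_cont[OF Lin_add.hyps(2)]]) simp_all
  have eq: "(\<lambda>\<gamma>. (P \<gamma> + Q \<gamma>) - (P (dual_neg \<gamma>) + Q (dual_neg \<gamma>))) =
            (\<lambda>\<gamma>. (P \<gamma> - P (dual_neg \<gamma>)) + (Q \<gamma> - Q (dual_neg \<gamma>)))" by (simp add: algebra_simps)
  have "(\<integral>\<gamma>. (P \<gamma> + Q \<gamma>) - (P (dual_neg \<gamma>) + Q (dual_neg \<gamma>)) \<partial>\<mu>) =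
        (\<integral>\<gamma>. P \<gamma> - P (dual_neg \<gamma>) \<partial>\<mu>) + (\<integral>\<gamma>. Q \<gamma> - Q (dual_neg \<gamma>) \<partial>\<mu>)"
    unfolding eq by (rule Bochner_Integration.integral_add[OF integrable_TT[OF \<mu> cP] integrable_TT[OF \<mu> cQ]])
  moreover have "(\<integral>\<gamma>. (P \<gamma> + Q \<gamma>) - (P (dual_neg \<gamma>) + Q (dual_neg \<gamma>)) \<partial>\<nu>) =
        (\<integral>\<gamma>. P \<gamma> - P (dual_neg \<gamma>) \<partial>\<nu>) + (\<integral>\<gamma>. Q \<gamma> - Q (dual_neg \<gamma>) \<partial>\<nu>)"
    unfolding eq by (rule Bochner_Integration.integral_add[OF integrable_TT[OF \<nu> cP] integrable_TT[OF \<nu> cQ]])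
  ultimately show ?case using Lin_add.IH by simp
qed

lemma Cp_ident_M:
  assumes M: "dual_prob_measure (M :: ('a \<Rightarrow> complex) measure)"
    and P: "P \<in> Cp" and Q: "Q \<in> Lin" and PQ: "\<forall>\<gamma>\<in>(dual_group :: ('a \<Rightarrow> complex) set). P \<gamma> = Q \<gamma>"
  shows "(\<integral>\<gamma>. Re (P \<gamma>) - Re (P (dual_neg \<gamma>)) \<partial>M) = Re (\<integral>\<gamma>. Q \<gamma> - Q (dual_neg \<gamma>) \<partial>M)"
proof -
  have cQ: "continuous_on TT (\<lambda>\<gamma>. Q \<gamma> - Q (dual_neg \<gamma>))"
    by (intro continuous_on_diff cont_neg_TT continuous_on_subset[OF Lin_cont[OF Q]]) simp_all
  have "(\<integral>\<gamma>. Re (P \<gamma>) - Re (P (dual_neg \<gamma>)) \<partial>M) = (\<integral>\<gamma>. Re (Q \<gamma> - Q (dual_neg \<gamma>)) \<partial>M)"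
  proof (rule Bochner_Integration.integral_cong[OF refl])
    fix \<gamma> assume "\<gamma> \<in> space M"
    then have "\<gamma> \<in> dual_group" "dual_neg \<gamma> \<in> dual_group" using dpm(2)[OF M] dual_neg_in by auto
    then show "Re (P \<gamma>) - Re (P (dual_neg \<gamma>)) = Re (Q \<gamma> - Q (dual_neg \<gamma>))" using PQ by simp
  qed
  also have "\<dots> = Re (\<integral>\<gamma>. Q \<gamma> - Q (dual_neg \<gamma>) \<partial>M)"
    by (rule integral_Re[OF integrable_TT[OF M cQ]])
  finally show ?thesis .
qed

lemma Cp_ident:
  assumes \<mu>: "dual_prob_measure (\<mu> :: ('a \<Rightarrow> complex) measure)" and \<nu>: "dual_prob_measure \<nu>"
    and Im: "\<And>x. Im (fourier_stieltjes \<nu> x) = Im (fourier_stieltjes \<mu> x)"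
    and P: "P \<in> Cp"
  shows "(\<integral>\<gamma>. Re (P \<gamma>) - Re (P (dual_neg \<gamma>)) \<partial>\<mu>) = (\<integral>\<gamma>. Re (P \<gamma>) - Re (P (dual_neg \<gamma>)) \<partial>\<nu>)"
proof -
  obtain Q where Q: "Q \<in> (Lin :: (('a \<Rightarrow> complex) \<Rightarrow> complex) set)" "\<forall>\<gamma>\<in>dual_group. P \<gamma> = Q \<gamma>"
    using Cp_Lin[OF P] by blast
  show ?thesis
    unfolding Cp_ident_M[OF \<mu> P Q] Cp_ident_M[OF \<nu> P Q] Lin_ident[OF \<mu> \<nu> Im Q(1)] ..
qed

end

context
  fixes dummy :: "'a::{topological_ab_group_add,t2_space}"
begin

lemma dpm_emeasure:
  assumes M: "dual_prob_measure (M :: ('a \<Rightarrow> complex) measure)"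
  shows "emeasure M X = ennreal (measure M X)"
  by (rule finite_measure.emeasure_eq_measure[OF dpm_finite[OF M]])

lemma outer_approx:
  assumes M: "dual_prob_measure (M :: ('a \<Rightarrow> complex) measure)" and E: "E \<in> sets M" and e: "e > 0"
  shows "\<exists>V. openin dual_topology V \<and> E \<subseteq> V \<and> measure M V < measure M E + e"
proof -
  have reg: "emeasure M E = (INF V \<in> {V. openin dual_topology V \<and> E \<subseteq> V}. emeasure M V)"
    using M E unfolding dual_prob_measure_def by blast
  have "ennreal (measure M E) < ennreal (measure M E + e)"
    using e by (subst ennreal_less_iff) (simp_all add: measure_nonneg)
  then have "(INF V \<in> {V. openin dual_topology V \<and> E \<subseteq> V}. emeasure M V) < ennreal (measure M E + e)"
    using reg dpm_emeasure[OF M] by simp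
  then obtain V where V: "openin dual_topology V" "E \<subseteq> V" "emeasure M V < ennreal (measure M E + e)"
    unfolding INF_less_iff by blast
  then have "measure M V < measure M E + e"
    using dpm_emeasure[OF M, of V] ennreal_less_iff[OF measure_nonneg[of M V], of "measure M E + e"] by simp
  then show ?thesis using V(1,2) by blast
qed

lemma inner_approx:
  assumes M: "dual_prob_measure (M :: ('a \<Rightarrow> complex) measure)" and e: "e > 0"
  shows "\<exists>L. compactin dual_topology L \<and> 1 - e < measure M L"
proof -
  have sp: "space M \<in> sets M" by simp
  have reg: "emeasure M (space M) = (SUP K \<in> {K. compactin dual_topology K \<and> K \<subseteq> space M}. emeasure M K)"
    using M sp unfolding dual_prob_measure_def by blast
  have one: "emeasure M (space M) = 1" by (rule prob_space.emeasure_space_1[OF dpm(1)[OF M]])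
  have lt: "ennreal (1 - e) < 1"
  proof (cases "0 \<le> 1 - e")
    case True then show ?thesis using e ennreal_less_iff[OF True, of 1] by simp
  next
    case False then show ?thesis by (simp add: ennreal_neg)
  qed
  then have "ennreal (1 - e) < (SUP K \<in> {K. compactin dual_topology K \<and> K \<subseteq> space M}. emeasure M K)"
    using reg one by simp
  then obtain K where K: "compactin dual_topology K" "ennreal (1 - e) < emeasure M K"
    unfolding less_SUP_iff by blast
  have "1 - e < measure M K"
  proof (cases "0 \<le> 1 - e")
    case True then show ?thesis using K(2) dpm_emeasure[OF M, of K] ennreal_less_iff[OF True] by simp
  next
    case False then show ?thesis using measure_nonneg[of M K] by linarith
  qed
  then show ?thesis using K(1) by blast
qed

lemma int_le_ind2:
  assumes M: "dual_prob_measure (M :: ('a \<Rightarrow> complex) measure)" and f: "integrable M f"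
    and A: "A \<in> sets M" and B: "B \<in> sets M"
    and le: "\<forall>\<gamma>\<in>dual_group. f \<gamma> \<le> indicator A \<gamma> + indicator B \<gamma>"
  shows "integral\<^sup>L M f \<le> measure M A + measure M B"
proof -
  interpret finite_measure M by (rule dpm_finite[OF M])
  have iA: "integrable M (indicator A :: _ \<Rightarrow> real)" using A by (simp add: less_top[symmetric])
  have iB: "integrable M (indicator B :: _ \<Rightarrow> real)" using B by (simp add: less_top[symmetric])
  have "integral\<^sup>L M f \<le> (\<integral>\<gamma>. indicator A \<gamma> + indicator B \<gamma> \<partial>M)"
    by (rule integral_mono[OF f Bochner_Integration.integrable_add[OF iA iB]]) (use le dpm(2)[OF M] in simp)
  also have "\<dots> = measure M A + measure M B"
    using A B sets.sets_into_space[OF A] sets.sets_into_space[OF B]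
    by (simp add: Bochner_Integration.integral_add[OF iA iB] Int_absorb2)
  finally show ?thesis .
qed

lemma ind_le_int:
  assumes M: "dual_prob_measure (M :: ('a \<Rightarrow> complex) measure)" and f: "integrable M f"
    and A: "A \<in> sets M"
    and le: "\<forall>\<gamma>\<in>dual_group. indicator A \<gamma> \<le> f \<gamma>"
  shows "measure M A \<le> integral\<^sup>L M f"
proof -
  interpret finite_measure M by (rule dpm_finite[OF M])
  have iA: "integrable M (indicator A :: _ \<Rightarrow> real)" using A by (simp add: less_top[symmetric])
  have "(\<integral>\<gamma>. indicator A \<gamma> \<partial>M) \<le> integral\<^sup>L M f"
    by (rule integral_mono[OF iA f]) (use le dpm(2)[OF M] in simp)
  moreover have "(\<integral>\<gamma>. indicator A \<gamma> \<partial>M) = measure M A"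
    using sets.sets_into_space[OF A] by (simp add: Int_absorb2)
  ultimately show ?thesis by simp
qed

lemma int_abs_le:
  assumes M: "dual_prob_measure (M :: ('a \<Rightarrow> complex) measure)" and f: "integrable M f"
    and le: "\<forall>\<gamma>\<in>dual_group. \<bar>f \<gamma>\<bar> \<le> (c::real)"
  shows "\<bar>integral\<^sup>L M f\<bar> \<le> c"
proof -
  interpret finite_measure M by (rule dpm_finite[OF M])
  have sp: "measure M (space M) = 1" using prob_space.prob_space[OF dpm(1)[OF M]] .
  have "integral\<^sup>L M f \<le> (\<integral>\<gamma>. c \<partial>M)"
    by (rule integral_mono[OF f integrable_const]) (use le dpm(2)[OF M] in force)
  moreover have "(\<integral>\<gamma>. - f \<gamma> \<partial>M) \<le> (\<integral>\<gamma>. c \<partial>M)"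
    by (rule integral_mono[OF Bochner_Integration.integrable_minus[OF f] integrable_const]) (use le dpm(2)[OF M] in force)
  ultimately show ?thesis using sp by simp
qed

end

context
  fixes dummy :: "'a::{topological_ab_group_add,t2_space}"
begin

lemma approx_M:
  assumes M: "dual_prob_measure (M :: ('a \<Rightarrow> complex) measure)"
    and h: "continuous_on TT h" and P: "P \<in> Cp"
    and ap: "\<forall>x\<in>TT. \<bar>h x - Re (P x)\<bar> < e"
  shows "\<bar>(\<integral>\<gamma>. Re (P \<gamma>) - Re (P (dual_neg \<gamma>)) \<partial>M) - ((\<integral>\<gamma>. h \<gamma> \<partial>M) - (\<integral>\<gamma>. h (dual_neg \<gamma>) \<partial>M))\<bar> \<le> 2 * e"
proof -
  have cp: "continuous_on TT (\<lambda>\<gamma>. Re (P \<gamma>))"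
    by (rule continuous_on_Re[OF continuous_on_subset[OF Cp_cont[OF P]]]) simp
  have i1: "integrable M (\<lambda>\<gamma>. Re (P \<gamma>) - Re (P (dual_neg \<gamma>)))"
    by (rule integrable_TT[OF M continuous_on_diff[OF cp cont_neg_TT[OF cp]]])
  have ih: "integrable M h" by (rule integrable_TT[OF M h])
  have ihn: "integrable M (\<lambda>\<gamma>. h (dual_neg \<gamma>))" by (rule integrable_TT[OF M cont_neg_TT[OF h]])
  have i2: "integrable M (\<lambda>\<gamma>. h \<gamma> - h (dual_neg \<gamma>))"
    by (rule Bochner_Integration.integrable_diff[OF ih ihn])
  have "(\<integral>\<gamma>. h \<gamma> \<partial>M) - (\<integral>\<gamma>. h (dual_neg \<gamma>) \<partial>M) = (\<integral>\<gamma>. h \<gamma> - h (dual_neg \<gamma>) \<partial>M)"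
    by (rule Bochner_Integration.integral_diff[OF ih ihn, symmetric])
  moreover have "(\<integral>\<gamma>. Re (P \<gamma>) - Re (P (dual_neg \<gamma>)) \<partial>M) - (\<integral>\<gamma>. h \<gamma> - h (dual_neg \<gamma>) \<partial>M)
      = (\<integral>\<gamma>. (Re (P \<gamma>) - Re (P (dual_neg \<gamma>))) - (h \<gamma> - h (dual_neg \<gamma>)) \<partial>M)"
    by (rule Bochner_Integration.integral_diff[OF i1 i2, symmetric])
  moreover have "\<bar>(\<integral>\<gamma>. (Re (P \<gamma>) - Re (P (dual_neg \<gamma>))) - (h \<gamma> - h (dual_neg \<gamma>)) \<partial>M)\<bar> \<le> 2 * e"
  proof (rule int_abs_le[OF M Bochner_Integration.integrable_diff[OF i1 i2]], intro ballI)
    fix \<gamma> assume g: "\<gamma> \<in> (dual_group :: ('a \<Rightarrow> complex) set)"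
    then have "\<gamma> \<in> TT" "dual_neg \<gamma> \<in> TT" using dual_group_TT dual_neg_TT by blast+
    then have "\<bar>h \<gamma> - Re (P \<gamma>)\<bar> < e" "\<bar>h (dual_neg \<gamma>) - Re (P (dual_neg \<gamma>))\<bar> < e" using ap by blast+
    then show "\<bar>(Re (P \<gamma>) - Re (P (dual_neg \<gamma>))) - (h \<gamma> - h (dual_neg \<gamma>))\<bar> \<le> 2 * e" by linarith
  qed
  ultimately show ?thesis by simp
qed

lemma main_ineq:
  assumes \<mu>: "dual_prob_measure (\<mu> :: ('a \<Rightarrow> complex) measure)" and \<nu>: "dual_prob_measure \<nu>"
    and Im: "\<And>x. Im (fourier_stieltjes \<nu> x) = Im (fourier_stieltjes \<mu> x)"
    and K: "compactin dual_topology K" and K0: "measure \<mu> (dual_neg ` K) = 0"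
  shows "measure \<mu> K \<le> measure \<nu> K"
proof -
  have KDG: "K \<subseteq> (dual_group :: ('a \<Rightarrow> complex) set)"
    using compactin_subset_topspace[OF K] dual_topspace by blast
  have Kc: "compact K" by (rule dual_compact[OF K])
  define K' where "K' = dual_neg ` K"
  have K'DG: "K' \<subseteq> (dual_group :: ('a \<Rightarrow> complex) set)" using KDG dual_neg_in unfolding K'_def by blast
  have K'c: "compact K'" unfolding K'_def
    by (rule compact_continuous_image[OF continuous_on_subset[OF dual_neg_cont] Kc]) simp
  have sets_eq: "sets \<mu> = sets dual_borel" "sets \<nu> = sets dual_borel" using dpm(3) \<mu> \<nu> by blast+
  have Ks: "K \<in> sets \<mu>" "K \<in> sets \<nu>" using dual_compact_sets[OF Kc KDG] sets_eq by simp_all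
  have K's: "K' \<in> sets \<nu>" using dual_compact_sets[OF K'c K'DG] sets_eq by simp_all
  show ?thesis
  proof (rule field_le_epsilon)
    fix e :: real assume "0 < e"
    define \<epsilon> where "\<epsilon> = e / 8"
    have ep: "\<epsilon> > 0" using \<open>0 < e\<close> by (simp add: \<epsilon>_def)
    obtain V1 where V1: "openin dual_topology V1" "K \<subseteq> V1" "measure \<nu> V1 < measure \<nu> K + \<epsilon>"
      using outer_approx[OF \<nu> Ks(2) ep] by blast
    have K'sm: "K' \<in> sets \<mu>" using dual_compact_sets[OF K'c K'DG] sets_eq by simp_all
    obtain V2 where V2: "openin dual_topology V2" "K' \<subseteq> V2" "measure \<mu> V2 < measure \<mu> K' + \<epsilon>"
      using outer_approx[OF \<mu> K'sm ep] by blast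
    obtain L1 where L1: "compactin dual_topology L1" "1 - \<epsilon> < measure \<nu> L1"
      using inner_approx[OF \<nu> ep] by blast
    obtain L2 where L2: "compactin dual_topology L2" "1 - \<epsilon> < measure \<mu> L2"
      using inner_approx[OF \<mu> ep] by blast
    have L1DG: "L1 \<subseteq> (dual_group :: ('a \<Rightarrow> complex) set)"
      using compactin_subset_topspace[OF L1(1)] dual_topspace by blast
    have L2DG: "L2 \<subseteq> (dual_group :: ('a \<Rightarrow> complex) set)"
      using compactin_subset_topspace[OF L2(1)] dual_topspace by blast
    have cl1: "closedin dual_topology ((dual_group :: ('a \<Rightarrow> complex) set) - V1)"
      unfolding dual_topspace[symmetric] by (rule closedin_diff[OF closedin_topspace V1(1)])
    have cl2: "closedin dual_topology ((dual_group :: ('a \<Rightarrow> complex) set) - V2)"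
      unfolding dual_topspace[symmetric] by (rule closedin_diff[OF closedin_topspace V2(1)])
    define C1 where "C1 = L1 \<inter> ((dual_group :: ('a \<Rightarrow> complex) set) - V1)"
    define D2 where "D2 = L2 \<inter> ((dual_group :: ('a \<Rightarrow> complex) set) - V2)"
    define C where "C = C1 \<union> dual_neg ` D2"
    have C1c: "compact C1" unfolding C1_def by (rule dual_compact[OF compact_Int_closedin[OF L1(1) cl1]])
    have D2c: "compact D2" unfolding D2_def by (rule dual_compact[OF compact_Int_closedin[OF L2(1) cl2]])
    have Cc: "compact C" unfolding C_def
      by (intro compact_Un C1c compact_continuous_image[OF continuous_on_subset[OF dual_neg_cont] D2c]) simp
    have CDG: "C \<subseteq> (dual_group :: ('a \<Rightarrow> complex) set)"
      unfolding C_def C1_def D2_def using dual_neg_in by blast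
    have disj: "K \<inter> C = {}"
    proof -
      have "K \<inter> C1 = {}" unfolding C1_def using V1(2) by blast
      moreover have "K \<inter> dual_neg ` D2 = {}"
      proof (rule ccontr)
        assume "K \<inter> dual_neg ` D2 \<noteq> {}"
        then obtain \<delta> where "\<delta> \<in> D2" "dual_neg \<delta> \<in> K" by blast
        then have "\<delta> \<in> K'" unfolding K'_def by (metis dual_neg_neg image_eqI)
        then show False using \<open>\<delta> \<in> D2\<close> V2(2) unfolding D2_def by blast
      qed
      ultimately show ?thesis unfolding C_def by blast
    qed
    obtain h :: "('a \<Rightarrow> complex) \<Rightarrow> real" where h: "continuous_on TT h" "\<And>x. x \<in> TT \<Longrightarrow> 0 \<le> h x \<and> h x \<le> 1"
      "\<And>x. x \<in> K \<Longrightarrow> h x = 1" "\<And>x. x \<in> C \<Longrightarrow> h x = 0"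
    proof -
      have KTT: "K \<subseteq> TT" using KDG dual_group_TT by blast
      have CTT: "C \<subseteq> TT" using CDG dual_group_TT by blast
      show ?thesis by (rule urysohn_TT[OF Kc Cc KTT CTT disj]) (rule that, assumption+)
    qed
    obtain P where P: "P \<in> Cp" "\<forall>x\<in>TT. \<bar>h x - Re (P x)\<bar> < \<epsilon>"
      using Rp_approx[OF h(1) ep] by blast
    have ih\<mu>: "integrable \<mu> h" "integrable \<mu> (\<lambda>\<gamma>. h (dual_neg \<gamma>))"
      using integrable_TT[OF \<mu> h(1)] integrable_TT[OF \<mu> cont_neg_TT[OF h(1)]] by simp_all
    have ih\<nu>: "integrable \<nu> h" "integrable \<nu> (\<lambda>\<gamma>. h (dual_neg \<gamma>))"
      using integrable_TT[OF \<nu> h(1)] integrable_TT[OF \<nu> cont_neg_TT[OF h(1)]] by simp_all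
    have inTT: "\<gamma> \<in> TT" "dual_neg \<gamma> \<in> TT" if "\<gamma> \<in> (dual_group :: ('a \<Rightarrow> complex) set)" for \<gamma>
      using that dual_group_TT dual_neg_TT by blast+
    have sp\<mu>: "space \<mu> = dual_group" and sp\<nu>: "space \<nu> = dual_group" using dpm(2) \<mu> \<nu> by blast+
    have cL1: "measure \<nu> (dual_group - L1) = 1 - measure \<nu> L1"
    proof -
      have "L1 \<in> sets \<nu>" using dual_compact_sets[OF dual_compact[OF L1(1)] L1DG] sets_eq by simp
      then show ?thesis using prob_space.prob_compl[OF dpm(1)[OF \<nu>]] sp\<nu> by simp
    qed
    have cL2: "measure \<mu> (dual_group - L2) = 1 - measure \<mu> L2"
    proof -
      have "L2 \<in> sets \<mu>" using dual_compact_sets[OF dual_compact[OF L2(1)] L2DG] sets_eq by simp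
      then show ?thesis using prob_space.prob_compl[OF dpm(1)[OF \<mu>]] sp\<mu> by simp
    qed
    have cs1: "dual_group - L1 \<in> sets \<nu>"
      using sets.compl_sets[of L1 \<nu>] dual_compact_sets[OF dual_compact[OF L1(1)] L1DG] sets_eq sp\<nu> by simp
    have cs2: "dual_group - L2 \<in> sets \<mu>"
      using sets.compl_sets[of L2 \<mu>] dual_compact_sets[OF dual_compact[OF L2(1)] L2DG] sets_eq sp\<mu> by simp
    have V1s: "V1 \<in> sets \<nu>" using dual_openin_sets[OF V1(1)] sets_eq by simp
    have V2s: "V2 \<in> sets \<mu>" using dual_openin_sets[OF V2(1)] sets_eq by simp
    have b1: "measure \<mu> K \<le> (\<integral>\<gamma>. h \<gamma> \<partial>\<mu>)"
    proof (rule ind_le_int[OF \<mu> ih\<mu>(1) Ks(1)], intro ballI)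
      fix \<gamma> assume "\<gamma> \<in> (dual_group :: ('a \<Rightarrow> complex) set)"
      then show "indicator K \<gamma> \<le> h \<gamma>" using h(2,3) inTT by (cases "\<gamma> \<in> K") auto
    qed
    have b2: "(\<integral>\<gamma>. h (dual_neg \<gamma>) \<partial>\<mu>) \<le> measure \<mu> V2 + measure \<mu> (dual_group - L2)"
    proof (rule int_le_ind2[OF \<mu> ih\<mu>(2) V2s cs2], intro ballI)
      fix \<gamma> assume g: "\<gamma> \<in> (dual_group :: ('a \<Rightarrow> complex) set)"
      show "h (dual_neg \<gamma>) \<le> indicator V2 \<gamma> + indicator (dual_group - L2) \<gamma>"
      proof (cases "\<gamma> \<in> V2 \<or> \<gamma> \<notin> L2")
        case True
        have "h (dual_neg \<gamma>) \<le> 1" using h(2)[OF inTT(2)[OF g]] by blast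
        moreover have "(1::real) \<le> indicator V2 \<gamma> + indicator (dual_group - L2) \<gamma>"
          using True g by (auto simp: indicator_def)
        ultimately show ?thesis by linarith
      next
        case False
        then have "\<gamma> \<in> D2" unfolding D2_def using g by blast
        then have "dual_neg \<gamma> \<in> C" unfolding C_def by blast
        then show ?thesis using h(4) by (simp add: indicator_def)
      qed
    qed
    have b3: "(\<integral>\<gamma>. h \<gamma> \<partial>\<nu>) \<le> measure \<nu> V1 + measure \<nu> (dual_group - L1)"
    proof (rule int_le_ind2[OF \<nu> ih\<nu>(1) V1s cs1], intro ballI)
      fix \<gamma> assume g: "\<gamma> \<in> (dual_group :: ('a \<Rightarrow> complex) set)"
      show "h \<gamma> \<le> indicator V1 \<gamma> + indicator (dual_group - L1) \<gamma>"
      proof (cases "\<gamma> \<in> V1 \<or> \<gamma> \<notin> L1")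
        case True
        have "h \<gamma> \<le> 1" using h(2)[OF inTT(1)[OF g]] by blast
        moreover have "(1::real) \<le> indicator V1 \<gamma> + indicator (dual_group - L1) \<gamma>"
          using True g by (auto simp: indicator_def)
        ultimately show ?thesis by linarith
      next
        case False
        then have "\<gamma> \<in> C" unfolding C_def C1_def using g by blast
        then show ?thesis using h(4) by (simp add: indicator_def)
      qed
    qed
    have b4: "measure \<nu> K' \<le> (\<integral>\<gamma>. h (dual_neg \<gamma>) \<partial>\<nu>)"
    proof (rule ind_le_int[OF \<nu> ih\<nu>(2) K's], intro ballI)
      fix \<gamma> assume g: "\<gamma> \<in> (dual_group :: ('a \<Rightarrow> complex) set)"
      show "indicator K' \<gamma> \<le> h (dual_neg \<gamma>)"
      proof (cases "\<gamma> \<in> K'")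
        case True
        then have "dual_neg \<gamma> \<in> K" unfolding K'_def by auto
        then show ?thesis using h(3) True by simp
      next
        case False then show ?thesis using h(2) inTT[OF g] by simp
      qed
    qed
    have a\<mu>: "\<bar>(\<integral>\<gamma>. Re (P \<gamma>) - Re (P (dual_neg \<gamma>)) \<partial>\<mu>) - ((\<integral>\<gamma>. h \<gamma> \<partial>\<mu>) - (\<integral>\<gamma>. h (dual_neg \<gamma>) \<partial>\<mu>))\<bar> \<le> 2 * \<epsilon>"
      by (rule approx_M[OF \<mu> h(1) P(1,2)])
    have a\<nu>: "\<bar>(\<integral>\<gamma>. Re (P \<gamma>) - Re (P (dual_neg \<gamma>)) \<partial>\<nu>) - ((\<integral>\<gamma>. h \<gamma> \<partial>\<nu>) - (\<integral>\<gamma>. h (dual_neg \<gamma>) \<partial>\<nu>))\<bar> \<le> 2 * \<epsilon>"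
      by (rule approx_M[OF \<nu> h(1) P(1,2)])
    have id: "(\<integral>\<gamma>. Re (P \<gamma>) - Re (P (dual_neg \<gamma>)) \<partial>\<mu>) = (\<integral>\<gamma>. Re (P \<gamma>) - Re (P (dual_neg \<gamma>)) \<partial>\<nu>)"
      by (rule Cp_ident[OF \<mu> \<nu> Im P(1)])
    have "measure \<mu> K' = 0" using K0 unfolding K'_def .
    moreover have "0 \<le> measure \<nu> K'" by (rule measure_nonneg)
    ultimately show "measure \<mu> K \<le> measure \<nu> K + e"
      using b1 b2 b3 b4 a\<mu> a\<nu> id V1(3) V2(3) L1(2) L2(2) cL1 cL2 unfolding \<epsilon>_def by linarith
  qed
qed

end

theorem corollary1:
  fixes \<mu> :: "('a::{topological_ab_group_add,t2_space} \<Rightarrow> complex) measure"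
    and U :: "('a \<Rightarrow> complex) set"
  assumes "lca_group TYPE('a)"
    and "dual_prob_measure \<mu>"
    and "U \<in> sets dual_borel"
    and "U \<inter> {\<gamma> \<in> dual_group. dual_neg \<gamma> \<in> U} = {}"
    and "emeasure \<mu> U = 1"
  shows "\<forall>g. characteristic_function g \<and> (\<forall>x. Im (g x) = Im (fourier_stieltjes \<mu> x))
             \<longrightarrow> g = fourier_stieltjes \<mu>"
proof (intro allI impI, elim conjE)
  fix g :: "'a \<Rightarrow> complex"
  assume cf: "characteristic_function g" and Img: "\<forall>x. Im (g x) = Im (fourier_stieltjes \<mu> x)"
  obtain \<nu> where \<nu>: "dual_prob_measure \<nu>" "g = fourier_stieltjes \<nu>"
    using cf unfolding characteristic_function_def by blast
  have \<mu>: "dual_prob_measure \<mu>" by (rule assms(2))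
  have Im: "\<And>x. Im (fourier_stieltjes \<nu> x) = Im (fourier_stieltjes \<mu> x)" using Img \<nu>(2) by simp
  interpret pm: prob_space \<mu> by (rule dpm(1)[OF \<mu>])
  interpret pn: prob_space \<nu> by (rule dpm(1)[OF \<nu>(1)])
  have sp\<mu>: "space \<mu> = dual_group" and sp\<nu>: "space \<nu> = dual_group" using dpm(2) \<mu> \<nu>(1) by blast+
  have se\<mu>: "sets \<mu> = sets dual_borel" and se\<nu>: "sets \<nu> = sets dual_borel" using dpm(3) \<mu> \<nu>(1) by blast+
  have U\<mu>: "U \<in> sets \<mu>" using assms(3) se\<mu> by simp
  have mU: "measure \<mu> U = 1" using assms(5) dpm_emeasure[OF \<mu>, of U] by simp
  have mcU: "measure \<mu> (dual_group - U) = 0" using pm.prob_compl[OF U\<mu>] sp\<mu> mU by simp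
  have cUs: "dual_group - U \<in> sets \<mu>" using sets.compl_sets[OF U\<mu>] sp\<mu> by simp
  have dom: "measure \<mu> E \<le> measure \<nu> E" if E: "E \<in> sets dual_borel" "E \<subseteq> U" for E
  proof -
    have reg: "emeasure \<mu> E = (SUP K \<in> {K. compactin dual_topology K \<and> K \<subseteq> E}. emeasure \<mu> K)"
      using \<mu> E(1) se\<mu> unfolding dual_prob_measure_def by blast
    have "emeasure \<mu> K \<le> emeasure \<nu> E" if K: "compactin dual_topology K" "K \<subseteq> E" for K
    proof -
      have KDG: "K \<subseteq> dual_group" using compactin_subset_topspace[OF K(1)] dual_topspace by blast
      have "dual_neg ` K \<subseteq> dual_group - U"
      proof
        fix \<delta> assume "\<delta> \<in> dual_neg ` K"
        then obtain \<gamma> where g: "\<gamma> \<in> K" "\<delta> = dual_neg \<gamma>" by blast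
        then have "\<gamma> \<in> U" "\<gamma> \<in> dual_group" using K(2) E(2) KDG by blast+
        then have dg: "\<delta> \<in> dual_group" using g(2) dual_neg_in by blast
        have "dual_neg \<delta> \<in> U" using g(2) \<open>\<gamma> \<in> U\<close> by simp
        then have "\<delta> \<notin> U" using assms(4) dg by blast
        then show "\<delta> \<in> dual_group - U" using dg by blast
      qed
      then have "measure \<mu> (dual_neg ` K) \<le> measure \<mu> (dual_group - U)"
        by (rule pm.finite_measure_mono[OF _ cUs])
      then have K0: "measure \<mu> (dual_neg ` K) = 0" using mcU measure_nonneg[of \<mu> "dual_neg ` K"] by linarith
      have "measure \<mu> K \<le> measure \<nu> K" by (rule main_ineq[OF \<mu> \<nu>(1) Im K(1) K0])
      then have "emeasure \<mu> K \<le> emeasure \<nu> K"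
        using dpm_emeasure[OF \<mu>, of K] dpm_emeasure[OF \<nu>(1), of K] by simp
      also have "\<dots> \<le> emeasure \<nu> E" by (rule emeasure_mono[OF K(2)]) (use E(1) se\<nu> in simp)
      finally show ?thesis .
    qed
    then have "emeasure \<mu> E \<le> emeasure \<nu> E" unfolding reg by (intro SUP_least) blast
    then show ?thesis using dpm_emeasure[OF \<mu>, of E] dpm_emeasure[OF \<nu>(1), of E] by simp
  qed
  have dom2: "measure \<mu> E \<le> measure \<nu> E" if E: "E \<in> sets dual_borel" for E
  proof -
    have EU: "E \<inter> U \<in> sets dual_borel" using E assms(3) by blast
    have E\<mu>: "E \<in> sets \<mu>" using E se\<mu> by simp
    have "E \<subseteq> space \<mu>" using sets.sets_into_space[OF E\<mu>] .
    then have "E \<subseteq> (E \<inter> U) \<union> (dual_group - U)" using sp\<mu> by blast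
    then have "measure \<mu> E \<le> measure \<mu> ((E \<inter> U) \<union> (dual_group - U))"
      by (rule pm.finite_measure_mono) (use EU se\<mu> cUs in auto)
    also have "\<dots> \<le> measure \<mu> (E \<inter> U) + measure \<mu> (dual_group - U)"
      by (rule measure_subadditive) (use EU se\<mu> cUs in auto)
    also have "\<dots> = measure \<mu> (E \<inter> U)" using mcU by simp
    also have "\<dots> \<le> measure \<nu> (E \<inter> U)" by (rule dom[OF EU]) blast
    also have "\<dots> \<le> measure \<nu> E" by (rule pn.finite_measure_mono) (use E se\<nu> in auto)
    finally show ?thesis .
  qed
  have eq: "measure \<mu> E = measure \<nu> E" if E: "E \<in> sets dual_borel" for E
  proof -
    have E\<mu>: "E \<in> sets \<mu>" and E\<nu>: "E \<in> sets \<nu>" using E se\<mu> se\<nu> by simp_all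
    have "dual_group - E \<in> sets dual_borel" using sets.compl_sets[OF E\<mu>] sp\<mu> se\<mu> by simp
    then have "measure \<mu> (dual_group - E) \<le> measure \<nu> (dual_group - E)" by (rule dom2)
    moreover have "measure \<mu> (dual_group - E) = 1 - measure \<mu> E" using pm.prob_compl[OF E\<mu>] sp\<mu> by simp
    moreover have "measure \<nu> (dual_group - E) = 1 - measure \<nu> E" using pn.prob_compl[OF E\<nu>] sp\<nu> by simp
    ultimately show ?thesis using dom2[OF E] by linarith
  qed
  have "\<mu> = \<nu>"
  proof (rule measure_eqI)
    show "sets \<mu> = sets \<nu>" using se\<mu> se\<nu> by simp
  next
    fix A assume "A \<in> sets \<mu>"
    then have "A \<in> sets dual_borel" using se\<mu> by simp
    then show "emeasure \<mu> A = emeasure \<nu> A"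
      using eq dpm_emeasure[OF \<mu>, of A] dpm_emeasure[OF \<nu>(1), of A] by simp
  qed
  then show "g = fourier_stieltjes \<mu>" using \<nu>(2) by simp
qed

end
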